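(* Let $T$ be a tree as below with an interior edge $e$, and suppose (after relabeling) that $\mathrm{de}(e)=\{1,\dots,k\}$. Let $T_e^-$ and $T_e^+$ be as below. Grade $\mathbb{K}[q]$ by $\deg q_{g_1\cdots g_n}=e_{g_1+\cdots+g_k}$, grade $\mathbb{K}[q]_-$ by $\deg q_{g_1\cdots g_k}=e_{g_1+\cdots+g_k}$, and grade $\mathbb{K}[q]_+$ by $\deg q_{h\,g_{k+1}\cdots g_n}=e_h$, where $e_h$ ($h\in G$) are the standard unit vectors of $\mathbb{Z}^G$; let $\mathcal{A}=\{e_h:h\in G\}$. Then $\mathcal{A}$ is linearly independent and $$I_{G,T}=I_{G,T_e^+}\times_{\mathcal{A}}I_{G,T_e^-},$$ where the toric fiber product variable corresponding to $q_{g_1\cdots g_n}$ is the product of $q_{h\,g_{k+1}\cdots g_n}\in\mathbb{K}[q]_+$ and $q_{g_1\cdots g_k}\in\mathbb{K}[q]_-$ with $h=g_1+\cdots+g_k$.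
   Context: $\mathbb{K}$ is a field, $G$ a finite group written additively (not necessarily abelian). $T$ is a tree with leaves labeled $1,\dots,n+1$, rooted at leaf $n+1$, with edges directed away from the root. For an edge $e$, $\mathrm{de}(e)$ is the set of leaves reachable from $e$ by a directed path; it is assumed that every $\mathrm{de}(e)$ is an interval of integers. For $g_1,\dots,g_n\in G$, $g_e=\sum_{i\in\mathrm{de}(e)}g_i$, summed in increasing order of $i$. $\mathbb{K}[q]=\mathbb{K}[q_{g_1\cdots g_n}:g_i\in G]$, $\mathbb{K}[a]=\mathbb{K}[a^{(e)}_h: e\in E(T),h\in G]$, $\phi_{G,T}:q_{g_1\cdots g_n}\mapsto\prod_{e\in E(T)}a^{(e)}_{g_e}$, and $I_{G,T}=\ker\phi_{G,T}$. Edges are partially ordered by $e'<e$ if there is a directed path from $e$ to $e'$. An interior edge is one not incident to any leaf. $T_e^-$ is the subtree consisting of edges $e'\le e$, rooted at the tail of $e$, with non-root leaves $1,\dots,k$; $T_e^+$ is the subtree of edges $e'$ with $e'\not<e$ (so $T_e^+\cap T_e^-=\{e\}$), rooted at $n+1$, whose non-root leaves are the head of $e$ (listed first, carrying group label $h$) followed by $k+1,\dots,n$. $\mathbb{K}[q]_-=\mathbb{K}[q_{g_1\cdots g_k}]$ and $\mathbb{K}[q]_+=\mathbb{K}[q_{h\,g_{k+1}\cdots g_n}]$ are the ambient rings of $I_{G,T_e^-}$ and $I_{G,T_e^+}$, defined by the same construction for these rooted trees. Toric fiber product: for polynomial rings $\mathbb{K}[x^i_j]$, $\mathbb{K}[y^i_k]$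 graded by $\deg x^i_j=\deg y^i_k=\mathbf{a}^i$ and homogeneous ideals $I,J$, $I\times_{\mathcal{A}}J$ is the kernel of $\mathbb{K}[z^i_{jk}]\to\mathbb{K}[x]/I\otimes_{\mathbb{K}}\mathbb{K}[y]/J$, $z^i_{jk}\mapsto x^i_j\otimes y^i_k$; here the degree classes are indexed by $h\in G$. *)

theory Defs
  imports Main "HOL-Library.Poly_Mapping"
begin

type_synonym ('x, 'k) mpoly = "('x \<Rightarrow>\<^sub>0 nat) \<Rightarrow>\<^sub>0 'k"

definition Var :: "'x \<Rightarrow> ('x, 'k::comm_ring_1) mpoly" where
  "Var x = Poly_Mapping.single (Poly_Mapping.single x 1) 1"

definition Const :: "'k::comm_ring_1 \<Rightarrow> ('x, 'k) mpoly" where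
  "Const c = Poly_Mapping.single 0 c"

definition pvars :: "('x, 'k::zero) mpoly \<Rightarrow> 'x set" where
  "pvars p = (\<Union>m\<in>Poly_Mapping.keys p. Poly_Mapping.keys (m :: 'x \<Rightarrow>\<^sub>0 nat))"

definition polys_in :: "'x set \<Rightarrow> ('x, 'k::zero) mpoly set" where
  "polys_in V = {p. pvars p \<subseteq> V}"

definition subst :: "('x \<Rightarrow> ('y, 'k::comm_ring_1) mpoly) \<Rightarrow> ('x, 'k) mpoly \<Rightarrow> ('y, 'k) mpoly" where
  "subst P p = (\<Sum>\<alpha>\<in>Poly_Mapping.keys p. Const (Poly_Mapping.lookup p \<alpha>) * (\<Prod>x\<in>Poly_Mapping.keys \<alpha>. P x ^ Poly_Mapping.lookup \<alpha> x))"

inductive_set gen_ideal :: "('x, 'k::comm_ring_1) mpoly set \<Rightarrow> ('x, 'k) mpoly set"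
  for S where
  zero: "0 \<in> gen_ideal S"
| gen: "f \<in> S \<Longrightarrow> r * f \<in> gen_ideal S"
| add: "a \<in> gen_ideal S \<Longrightarrow> b \<in> gen_ideal S \<Longrightarrow> a + b \<in> gen_ideal S"

text \<open>We use the standard identification
  K[x]/I \<otimes>_K K[y]/J = K[x \<squnion> y]/(I + J), where I, J are extended to K[x \<squnion> y]
  (disjoint union of variables realised via the sum type).\<close>

definition tfp_vars :: "'x set \<Rightarrow> 'y set \<Rightarrow> ('x \<Rightarrow> 'd) \<Rightarrow> ('y \<Rightarrow> 'd) \<Rightarrow> ('x \<times> 'y) set" where
  "tfp_vars Vx Vy degx degy = {(j, k). j \<in> Vx \<and> k \<in> Vy \<and> degx j = degy k}"

definition toric_fiber_product ::
  "'x set \<Rightarrow> 'y set \<Rightarrow> ('x \<Rightarrow> 'd) \<Rightarrow> ('y \<Rightarrow> 'd) \<Rightarrow>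
   ('x, 'k::comm_ring_1) mpoly set \<Rightarrow> ('y, 'k) mpoly set \<Rightarrow> ('x \<times> 'y, 'k) mpoly set" where
  "toric_fiber_product Vx Vy degx degy I J =
     {p \<in> polys_in (tfp_vars Vx Vy degx degy).
        subst (\<lambda>(j, k). Var (Inl j) * Var (Inr k)) p
          \<in> gen_ideal (subst (\<lambda>x. Var (Inl x)) ` I \<union> subst (\<lambda>y. Var (Inr y)) ` J)}"

text \<open>A rooted tree: finite set E of directed edges (tail, head) on vertices of type 'v,
  root r, list ls of the non-root leaves (leaf i+1 in the paper is ls ! i).\<close>

definition tree_vertices :: "('v \<times> 'v) set \<Rightarrow> 'v set" where
  "tree_vertices E = fst ` E \<union> snd ` E"

definition undirected_degree :: "('v \<times> 'v) set \<Rightarrow> 'v \<Rightarrow> nat" where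
  "undirected_degree E v = card {e \<in> E. fst e = v} + card {e \<in> E. snd e = v}"

definition rooted_tree :: "('v \<times> 'v) set \<Rightarrow> 'v \<Rightarrow> 'v list \<Rightarrow> bool" where
  "rooted_tree E r ls \<longleftrightarrow>
     finite E \<and> E \<noteq> {} \<and>
     r \<in> tree_vertices E \<and>
     (\<forall>e\<in>E. snd e \<noteq> r) \<and>
     (\<forall>v\<in>tree_vertices E. v \<noteq> r \<longrightarrow> card {e \<in> E. snd e = v} = 1) \<and>
     (\<forall>v\<in>tree_vertices E. (r, v) \<in> E\<^sup>*) \<and>
     distinct (r # ls) \<and>
     set (r # ls) = {v \<in> tree_vertices E. undirected_degree E v = 1}"

text \<open>de(e): the (0-based) indices i of non-root leaves ls ! i reachable from e by a
  directed path (i.e. reachable from the head of e, the path starting with e).\<close>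
definition de :: "('v \<times> 'v) set \<Rightarrow> 'v list \<Rightarrow> ('v \<times> 'v) \<Rightarrow> nat set" where
  "de E ls e = {i. i < length ls \<and> (snd e, ls ! i) \<in> E\<^sup>*}"

definition edge_label :: "('v \<times> 'v) set \<Rightarrow> 'v list \<Rightarrow> ('v \<times> 'v) \<Rightarrow> 'g::monoid_add list \<Rightarrow> 'g" where
  "edge_label E ls e gs = sum_list (map (\<lambda>i. gs ! i) (filter (\<lambda>i. i \<in> de E ls e) [0..<length ls]))"

definition q_vars :: "nat \<Rightarrow> 'g list set" where
  "q_vars m = {gs. length gs = m}"

text \<open>phi_{G,T}: q_{g_1..g_m} \<mapsto> prod_{e \<in> E} a^{(e)}_{g_e}; a-variables indexed by (e, h).\<close>
definition phi :: "('v \<times> 'v) set \<Rightarrow> 'v list \<Rightarrow> ('g::monoid_add list, 'k::comm_ring_1) mpoly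
     \<Rightarrow> (('v \<times> 'v) \<times> 'g, 'k) mpoly" where
  "phi E ls = subst (\<lambda>gs. \<Prod>e\<in>E. Var (e, edge_label E ls e gs))"

definition I_GT :: "('v \<times> 'v) set \<Rightarrow> 'v list \<Rightarrow> ('g::monoid_add list, 'k::comm_ring_1) mpoly set" where
  "I_GT E ls = {p \<in> polys_in (q_vars (length ls)). phi E ls p = 0}"

definition edge_less :: "('v \<times> 'v) set \<Rightarrow> ('v \<times> 'v) \<Rightarrow> ('v \<times> 'v) \<Rightarrow> bool" where
  "edge_less E e' e \<longleftrightarrow> e' \<noteq> e \<and> (snd e, fst e') \<in> E\<^sup>*"

definition interior_edge :: "('v \<times> 'v) set \<Rightarrow> 'v \<Rightarrow> 'v list \<Rightarrow> ('v \<times> 'v) \<Rightarrow> bool" where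
  "interior_edge E r ls e \<longleftrightarrow> e \<in> E \<and> fst e \<notin> set (r # ls) \<and> snd e \<notin> set (r # ls)"

text \<open>T_e^-: edges e' \<le> e, rooted at the tail of e, non-root leaves ls!0..ls!(k-1).\<close>
definition minus_edges :: "('v \<times> 'v) set \<Rightarrow> ('v \<times> 'v) \<Rightarrow> ('v \<times> 'v) set" where
  "minus_edges E e = {e' \<in> E. e' = e \<or> edge_less E e' e}"

text \<open>T_e^+: edges e' with not e' < e, rooted at r, non-root leaves: head of e, then
  ls!k, ..., ls!(n-1).\<close>
definition plus_edges :: "('v \<times> 'v) set \<Rightarrow> ('v \<times> 'v) \<Rightarrow> ('v \<times> 'v) set" where
  "plus_edges E e = {e' \<in> E. \<not> edge_less E e' e}"

definition unit_vec :: "'g \<Rightarrow> ('g \<Rightarrow> int)" where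
  "unit_vec h = (\<lambda>h'. if h' = h then 1 else 0)"

definition int_lin_independent :: "('g \<Rightarrow> int) set \<Rightarrow> bool" where
  "int_lin_independent S \<longleftrightarrow>
     \<not> (\<exists>t u. finite t \<and> t \<subseteq> S \<and> (\<lambda>h'. \<Sum>v\<in>t. u v * v h') = (\<lambda>_. 0) \<and> (\<exists>v\<in>t. u v \<noteq> 0))"

end

theory Submission
  imports Defs
begin


definition monom :: "('x \<Rightarrow> ('y, 'k::comm_ring_1) mpoly) \<Rightarrow> ('x \<Rightarrow>\<^sub>0 nat) \<Rightarrow> ('y, 'k) mpoly" where
  "monom P \<alpha> = (\<Prod>x\<in>Poly_Mapping.keys \<alpha>. P x ^ Poly_Mapping.lookup \<alpha> x)"

lemma subst_mono_def: "subst P p = (\<Sum>\<alpha>\<in>Poly_Mapping.keys p. Const (Poly_Mapping.lookup p \<alpha>) * monom P \<alpha>)"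
  unfolding subst_def monom_def ..

lemma monom_ext: "finite S \<Longrightarrow> Poly_Mapping.keys \<alpha> \<subseteq> S \<Longrightarrow> monom P \<alpha> = (\<Prod>x\<in>S. P x ^ Poly_Mapping.lookup \<alpha> x)"
  unfolding monom_def by (rule prod.mono_neutral_left) (auto simp: in_keys_iff)

lemma keys_add_nat: "Poly_Mapping.keys (\<alpha> + \<beta> :: 'x \<Rightarrow>\<^sub>0 nat) = Poly_Mapping.keys \<alpha> \<union> Poly_Mapping.keys \<beta>"
  by (auto simp: in_keys_iff lookup_add)

lemma monom_add: "monom P (\<alpha> + \<beta>) = monom P \<alpha> * monom P \<beta>"
proof -
  let ?S = "Poly_Mapping.keys \<alpha> \<union> Poly_Mapping.keys \<beta>"
  have "monom P (\<alpha> + \<beta>) = (\<Prod>x\<in>?S. P x ^ Poly_Mapping.lookup (\<alpha>+\<beta>) x)"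
    by (rule monom_ext) (auto simp: keys_add_nat)
  also have "\<dots> = (\<Prod>x\<in>?S. P x ^ Poly_Mapping.lookup \<alpha> x) * (\<Prod>x\<in>?S. P x ^ Poly_Mapping.lookup \<beta> x)"
    by (simp add: lookup_add power_add prod.distrib)
  also have "\<dots> = monom P \<alpha> * monom P \<beta>"
    using monom_ext[of ?S \<alpha> P] monom_ext[of ?S \<beta> P] by simp
  finally show ?thesis .
qed

lemma monom_zero [simp]: "monom P 0 = 1"
  by (simp add: monom_def)

lemma monom_single_Var: "monom P (Poly_Mapping.single x 1) = P x"
  unfolding monom_def by (simp del: One_nat_def)

lemma Const_0 [simp]: "Const 0 = 0" by (simp add: Const_def)
lemma Const_1 [simp]: "Const 1 = 1" by (simp add: Const_def)
lemma Const_add: "Const (a + b) = Const a + Const b" by (simp add: Const_def single_add)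
lemma Const_mult: "Const (a * b) = Const a * Const b" by (simp add: Const_def mult_single)
lemma Const_single: "Const c * Poly_Mapping.single m 1 = Poly_Mapping.single m c"
  by (simp add: Const_def mult_single)

lemma subst_ext: "finite S \<Longrightarrow> Poly_Mapping.keys p \<subseteq> S \<Longrightarrow>
   subst P p = (\<Sum>\<alpha>\<in>S. Const (Poly_Mapping.lookup p \<alpha>) * monom P \<alpha>)"
  unfolding subst_mono_def by (rule sum.mono_neutral_left) (auto simp: in_keys_iff)

lemma subst_add: "subst P (p + q) = subst P p + subst P q"
proof -
  let ?S = "Poly_Mapping.keys p \<union> Poly_Mapping.keys q"
  have "subst P (p + q) = (\<Sum>\<alpha>\<in>?S. Const (Poly_Mapping.lookup (p+q) \<alpha>) * monom P \<alpha>)"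
    using keys_add[of p q] by (intro subst_ext) auto
  also have "\<dots> = (\<Sum>\<alpha>\<in>?S. Const (Poly_Mapping.lookup p \<alpha>) * monom P \<alpha>) + (\<Sum>\<alpha>\<in>?S. Const (Poly_Mapping.lookup q \<alpha>) * monom P \<alpha>)"
    by (simp add: lookup_add Const_add distrib_right sum.distrib)
  also have "\<dots> = subst P p + subst P q"
    using subst_ext[of ?S p P] subst_ext[of ?S q P] by simp
  finally show ?thesis .
qed

lemma subst_zero [simp]: "subst P 0 = 0"
  by (simp add: subst_def)

lemma subst_single: "subst P (Poly_Mapping.single \<alpha> c) = Const c * monom P \<alpha>"
  by (cases "c = 0") (simp_all add: subst_mono_def)

lemma subst_diff: "subst P (p - q) = subst P p - subst P q"
  using subst_add[of P "p - q" q] by (simp add: algebra_simps)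

lemma subst_sum: "subst P (\<Sum>i\<in>A. f i) = (\<Sum>i\<in>A. subst P (f i))"
  by (induction A rule: infinite_finite_induct) (simp_all add: subst_add)

lemma poly_expand: "p = (\<Sum>\<alpha>\<in>Poly_Mapping.keys p. Poly_Mapping.single \<alpha> (Poly_Mapping.lookup p \<alpha>))"
proof (rule poly_mapping_eqI)
  fix \<beta>
  show "Poly_Mapping.lookup p \<beta> = Poly_Mapping.lookup (\<Sum>\<alpha>\<in>Poly_Mapping.keys p. Poly_Mapping.single \<alpha> (Poly_Mapping.lookup p \<alpha>)) \<beta>"
    by (simp add: lookup_sum lookup_single when_def in_keys_iff)
qed

lemma subst_mult: "subst P (p * q) = subst P p * subst P q"
proof -
  let ?s = "\<lambda>p \<alpha>. Poly_Mapping.single \<alpha> (Poly_Mapping.lookup p \<alpha>)"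
  have "p * q = (\<Sum>\<alpha>\<in>Poly_Mapping.keys p. ?s p \<alpha>) * (\<Sum>\<beta>\<in>Poly_Mapping.keys q. ?s q \<beta>)"
    using poly_expand[of p] poly_expand[of q] by simp
  also have "\<dots> = (\<Sum>\<alpha>\<in>Poly_Mapping.keys p. \<Sum>\<beta>\<in>Poly_Mapping.keys q. ?s p \<alpha> * ?s q \<beta>)"
    by (simp add: sum_distrib_left sum_distrib_right) (rule sum.swap)
  finally have "subst P (p * q) = (\<Sum>\<alpha>\<in>Poly_Mapping.keys p. \<Sum>\<beta>\<in>Poly_Mapping.keys q. subst P (?s p \<alpha> * ?s q \<beta>))"
    by (simp add: subst_sum)
  also have "\<dots> = (\<Sum>\<alpha>\<in>Poly_Mapping.keys p. \<Sum>\<beta>\<in>Poly_Mapping.keys q. subst P (?s p \<alpha>) * subst P (?s q \<beta>))"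
    by (simp add: mult_single subst_single monom_add Const_mult mult_ac)
  also have "\<dots> = subst P (\<Sum>\<alpha>\<in>Poly_Mapping.keys p. ?s p \<alpha>) * subst P (\<Sum>\<beta>\<in>Poly_Mapping.keys q. ?s q \<beta>)"
    by (simp add: subst_sum sum_distrib_left sum_distrib_right) (rule sum.swap)
  finally show ?thesis using poly_expand[of p, symmetric] poly_expand[of q, symmetric] by simp
qed

lemma subst_one [simp]: "subst P 1 = 1"
  using subst_single[of P 0 1] by simp

lemma subst_Const [simp]: "subst P (Const c) = Const c"
  by (metis Const_def subst_single monom_zero mult_1_right)

lemma subst_Var [simp]: "subst P (Var x) = P x"
  unfolding Var_def subst_single monom_single_Var by simp

lemma subst_prod: "subst P (\<Prod>i\<in>A. f i) = (\<Prod>i\<in>A. subst P (f i))"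
  by (induction A rule: infinite_finite_induct) (simp_all add: subst_mult)

lemma subst_power: "subst P (f ^ n) = subst P f ^ n"
  by (induction n) (simp_all add: subst_mult)

lemma subst_mono: "subst P (monom Q \<alpha>) = monom (\<lambda>x. subst P (Q x)) \<alpha>"
  unfolding monom_def by (simp add: subst_prod subst_power)

lemma subst_comp: "subst P (subst Q p) = subst (\<lambda>x. subst P (Q x)) p"
  unfolding subst_mono_def[of Q] subst_mono_def[of "\<lambda>x. subst P (Q x)"]
  by (simp add: subst_sum subst_mult subst_mono)

lemma keys_in_pvars: "\<alpha> \<in> Poly_Mapping.keys p \<Longrightarrow> Poly_Mapping.keys \<alpha> \<subseteq> pvars p"
  unfolding pvars_def by auto

lemma monom_cong: "(\<And>x. x \<in> Poly_Mapping.keys \<alpha> \<Longrightarrow> P x = Q x) \<Longrightarrow> monom P \<alpha> = monom Q \<alpha>"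
  unfolding monom_def by (rule prod.cong) auto

lemma subst_cong: "(\<And>x. x \<in> pvars p \<Longrightarrow> P x = Q x) \<Longrightarrow> subst P p = subst Q p"
  unfolding subst_mono_def
  by (rule sum.cong[OF refl]) (metis (no_types, lifting) keys_in_pvars monom_cong subsetD)




definition nsm :: "nat \<Rightarrow> ('y \<Rightarrow>\<^sub>0 nat) \<Rightarrow> ('y \<Rightarrow>\<^sub>0 nat)" where
  "nsm n m = (\<Sum>i<n. m)"

lemma lookup_nsm: "Poly_Mapping.lookup (nsm n m) y = n * Poly_Mapping.lookup m y"
  by (simp add: nsm_def lookup_sum)

lemma single_pow: "Poly_Mapping.single m (1::'k::comm_ring_1) ^ n = Poly_Mapping.single (nsm n m) 1"
proof (induction n)
  case 0 then show ?case by (simp add: nsm_def)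
next
  case (Suc n)
  have "nsm (Suc n) m = m + nsm n m" by (simp add: nsm_def add.commute)
  then show ?case using Suc by (simp add: mult_single)
qed

lemma prod_single: "(\<Prod>x\<in>S. Poly_Mapping.single (f x) (1::'k::comm_ring_1)) = Poly_Mapping.single (\<Sum>x\<in>S. f x) 1"
  by (induction S rule: infinite_finite_induct) (simp_all add: mult_single)

definition mmap :: "('x \<Rightarrow> ('y \<Rightarrow>\<^sub>0 nat)) \<Rightarrow> ('x \<Rightarrow>\<^sub>0 nat) \<Rightarrow> ('y \<Rightarrow>\<^sub>0 nat)" where
  "mmap \<mu> \<alpha> = (\<Sum>x\<in>Poly_Mapping.keys \<alpha>. nsm (Poly_Mapping.lookup \<alpha> x) (\<mu> x))"

lemma lookup_mmap: "Poly_Mapping.lookup (mmap \<mu> \<alpha>) y = (\<Sum>x\<in>Poly_Mapping.keys \<alpha>. Poly_Mapping.lookup \<alpha> x * Poly_Mapping.lookup (\<mu> x) y)"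
  by (simp add: mmap_def lookup_sum lookup_nsm)

lemma monom_monomial: "monom (\<lambda>x. Poly_Mapping.single (\<mu> x) (1::'k::comm_ring_1)) \<alpha> = Poly_Mapping.single (mmap \<mu> \<alpha>) 1"
  unfolding monom_def mmap_def by (simp add: single_pow prod_single)

lemma subst_monomial: "subst (\<lambda>x. Poly_Mapping.single (\<mu> x) (1::'k::comm_ring_1)) p
   = (\<Sum>\<alpha>\<in>Poly_Mapping.keys p. Poly_Mapping.single (mmap \<mu> \<alpha>) (Poly_Mapping.lookup p \<alpha>))"
  unfolding subst_mono_def monom_monomial by (simp add: Const_single)

lemma lookup_subst_monomial: "Poly_Mapping.lookup (subst (\<lambda>x. Poly_Mapping.single (\<mu> x) (1::'k::comm_ring_1)) p) \<gamma>
   = (\<Sum>\<alpha>\<in>{\<alpha>\<in>Poly_Mapping.keys p. mmap \<mu> \<alpha> = \<gamma>}. Poly_Mapping.lookup p \<alpha>)"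
  unfolding subst_monomial lookup_sum
  by (simp add: lookup_single when_def sum.inter_filter)

lemma subst_monomial_inj:
  assumes "inj (mmap \<mu>)" and "subst (\<lambda>x. Poly_Mapping.single (\<mu> x) (1::'k::comm_ring_1)) p = 0"
  shows "p = 0"
proof (rule poly_mapping_eqI)
  fix \<alpha>
  have "{\<beta>\<in>Poly_Mapping.keys p. mmap \<mu> \<beta> = mmap \<mu> \<alpha>} = {\<beta>\<in>Poly_Mapping.keys p. \<beta> = \<alpha>}"
    using assms(1) by (auto dest: injD)
  also have "\<dots> = (if \<alpha> \<in> Poly_Mapping.keys p then {\<alpha>} else {})" by auto
  finally have "Poly_Mapping.lookup p \<alpha> = Poly_Mapping.lookup (subst (\<lambda>x. Poly_Mapping.single (\<mu> x) (1::'k)) p) (mmap \<mu> \<alpha>)"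
    unfolding lookup_subst_monomial by (simp add: in_keys_iff)
  then show "Poly_Mapping.lookup p \<alpha> = Poly_Mapping.lookup 0 \<alpha>" using assms(2) by simp
qed

lemma kernel_decomp:
  fixes p :: "('x, 'k::comm_ring_1) mpoly"
  assumes "subst (\<lambda>x. Poly_Mapping.single (\<mu> x) (1::'k)) p = 0"
  shows "\<exists>rep. (\<forall>\<alpha>\<in>Poly_Mapping.keys p. rep \<alpha> \<in> Poly_Mapping.keys p \<and> mmap \<mu> (rep \<alpha>) = mmap \<mu> \<alpha>) \<and>
     p = (\<Sum>\<alpha>\<in>Poly_Mapping.keys p. Const (Poly_Mapping.lookup p \<alpha>) *
            (Poly_Mapping.single \<alpha> 1 - Poly_Mapping.single (rep \<alpha>) 1))"
proof -
  define rep where "rep \<alpha> = (SOME \<beta>. \<beta> \<in> Poly_Mapping.keys p \<and> mmap \<mu> \<beta> = mmap \<mu> \<alpha>)" for \<alpha>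
  have rep: "rep \<alpha> \<in> Poly_Mapping.keys p \<and> mmap \<mu> (rep \<alpha>) = mmap \<mu> \<alpha>" if "\<alpha> \<in> Poly_Mapping.keys p" for \<alpha>
  proof -
    have "\<exists>\<beta>. \<beta> \<in> Poly_Mapping.keys p \<and> mmap \<mu> \<beta> = mmap \<mu> \<alpha>" using that by blast
    then show ?thesis unfolding rep_def by (rule someI_ex)
  qed
  have rep_eq: "rep \<alpha> = rep \<alpha>'" if "mmap \<mu> \<alpha> = mmap \<mu> \<alpha>'" for \<alpha> \<alpha>'
    unfolding rep_def using that by simp
  have Z: "(\<Sum>\<alpha>\<in>Poly_Mapping.keys p. Poly_Mapping.single (rep \<alpha>) (Poly_Mapping.lookup p \<alpha>)) = 0"
  proof (rule poly_mapping_eqI)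
    fix \<beta>
    have "Poly_Mapping.lookup (\<Sum>\<alpha>\<in>Poly_Mapping.keys p. Poly_Mapping.single (rep \<alpha>) (Poly_Mapping.lookup p \<alpha>)) \<beta>
       = (\<Sum>\<alpha>\<in>{\<alpha>\<in>Poly_Mapping.keys p. rep \<alpha> = \<beta>}. Poly_Mapping.lookup p \<alpha>)"
      unfolding lookup_sum by (simp add: lookup_single when_def sum.inter_filter)
    also have "\<dots> = 0"
    proof (cases "\<exists>\<alpha>0\<in>Poly_Mapping.keys p. rep \<alpha>0 = \<beta>")
      case True
      then obtain \<alpha>0 where a0: "\<alpha>0 \<in> Poly_Mapping.keys p" "rep \<alpha>0 = \<beta>" by blast
      have "{\<alpha>\<in>Poly_Mapping.keys p. rep \<alpha> = \<beta>} = {\<alpha>\<in>Poly_Mapping.keys p. mmap \<mu> \<alpha> = mmap \<mu> \<alpha>0}"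
      proof -
        have "rep \<alpha> = \<beta> \<longleftrightarrow> mmap \<mu> \<alpha> = mmap \<mu> \<alpha>0" if "\<alpha> \<in> Poly_Mapping.keys p" for \<alpha>
          using rep[OF that] rep[OF a0(1)] a0(2) rep_eq[of \<alpha> \<alpha>0] by metis
        then show ?thesis by auto
      qed
      then show ?thesis
        using lookup_subst_monomial[of \<mu> p "mmap \<mu> \<alpha>0"] assms by simp
    next
      case False
      then show ?thesis by (intro sum.neutral) auto
    qed
    finally show "Poly_Mapping.lookup (\<Sum>\<alpha>\<in>Poly_Mapping.keys p. Poly_Mapping.single (rep \<alpha>) (Poly_Mapping.lookup p \<alpha>)) \<beta> = Poly_Mapping.lookup 0 \<beta>"
      by simp
  qed
  have "p = (\<Sum>\<alpha>\<in>Poly_Mapping.keys p. Poly_Mapping.single \<alpha> (Poly_Mapping.lookup p \<alpha>))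
          - (\<Sum>\<alpha>\<in>Poly_Mapping.keys p. Poly_Mapping.single (rep \<alpha>) (Poly_Mapping.lookup p \<alpha>))"
    using Z poly_expand[of p] by simp
  also have "\<dots> = (\<Sum>\<alpha>\<in>Poly_Mapping.keys p. Const (Poly_Mapping.lookup p \<alpha>) *
            (Poly_Mapping.single \<alpha> 1 - Poly_Mapping.single (rep \<alpha>) 1))"
    by (simp add: sum_subtractf right_diff_distrib Const_single)
  finally show ?thesis using rep by blast
qed

lemma Var_monomial: "Var x = Poly_Mapping.single (Poly_Mapping.single x 1) 1"
  by (simp add: Var_def)

lemma subst_Var_id: "subst Var p = p"
proof -
  have m: "mmap (\<lambda>x. Poly_Mapping.single x 1) \<alpha> = \<alpha>" for \<alpha> :: "'a \<Rightarrow>\<^sub>0 nat"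
  proof (rule poly_mapping_eqI)
    fix y
    show "Poly_Mapping.lookup (mmap (\<lambda>x. Poly_Mapping.single x 1) \<alpha>) y = Poly_Mapping.lookup \<alpha> y"
    proof -
      have "(\<Sum>x\<in>Poly_Mapping.keys \<alpha>. Poly_Mapping.lookup \<alpha> x * Poly_Mapping.lookup (Poly_Mapping.single x 1) y)
          = (\<Sum>x\<in>Poly_Mapping.keys \<alpha>. if x = y then Poly_Mapping.lookup \<alpha> x else 0)"
        by (rule sum.cong) (auto simp: lookup_single when_def)
      also have "\<dots> = Poly_Mapping.lookup \<alpha> y" by (simp add: sum.delta in_keys_iff)
      finally show ?thesis unfolding lookup_mmap .
    qed
  qed
  have "subst Var p = subst (\<lambda>x. Poly_Mapping.single (Poly_Mapping.single x 1) 1) p"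
  proof -
    have "Var = (\<lambda>x. Poly_Mapping.single (Poly_Mapping.single x 1) (1::'b))" by (rule ext) (rule Var_def)
    then show ?thesis by (rule arg_cong)
  qed
  also have "\<dots> = p" unfolding subst_monomial m using poly_expand[of p] by simp
  finally show ?thesis .
qed


lemma pvars_add: "pvars (a + b) \<subseteq> pvars a \<union> pvars b"
  unfolding pvars_def using keys_add[of a b] by blast

lemma pvars_diff: "pvars (a - b) \<subseteq> pvars a \<union> pvars b"
  unfolding pvars_def using keys_diff[of a b] by blast

lemma pvars_mult: "pvars (a * b) \<subseteq> pvars a \<union> pvars b"
proof
  fix x assume "x \<in> pvars (a * b)"
  then obtain m where m: "m \<in> Poly_Mapping.keys (a * b)" "x \<in> Poly_Mapping.keys m"
    unfolding pvars_def by blast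
  then obtain \<alpha> \<beta> where ab: "m = \<alpha> + \<beta>" "\<alpha> \<in> Poly_Mapping.keys a" "\<beta> \<in> Poly_Mapping.keys b"
    using keys_mult[of a b] m(1) by auto
  then have "x \<in> Poly_Mapping.keys \<alpha> \<or> x \<in> Poly_Mapping.keys \<beta>" using m(2) keys_add_nat[of \<alpha> \<beta>] by simp
  then show "x \<in> pvars a \<union> pvars b" using ab(2,3) unfolding pvars_def by blast
qed

lemma pvars_Const: "pvars (Const c) = {}"
  by (simp add: pvars_def Const_def)

lemma pvars_one: "pvars 1 = {}"
  by (simp add: pvars_def)

lemma pvars_Var: "pvars (Var x :: ('x, 'k::comm_ring_1) mpoly) = {x}"
  by (simp add: pvars_def Var_def)

lemma pvars_prod: "(\<And>i. i \<in> A \<Longrightarrow> pvars (f i) \<subseteq> V) \<Longrightarrow> pvars (\<Prod>i\<in>A. f i) \<subseteq> V"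
proof (induction A rule: infinite_finite_induct)
  case (insert x F)
  then show ?case using pvars_mult[of "f x" "prod f F"] by auto
qed (simp_all add: pvars_one)

lemma pvars_sum: "(\<And>i. i \<in> A \<Longrightarrow> pvars (f i) \<subseteq> V) \<Longrightarrow> pvars (\<Sum>i\<in>A. f i) \<subseteq> V"
proof (induction A rule: infinite_finite_induct)
  case (insert x F)
  then show ?case using pvars_add[of "f x" "sum f F"] by auto
qed (simp_all add: pvars_def)

lemma pvars_power: "pvars a \<subseteq> V \<Longrightarrow> pvars (a ^ n) \<subseteq> V"
proof (induction n)
  case (Suc n)
  then show ?case using pvars_mult[of a "a ^ n"] by auto
qed (simp add: pvars_one)

lemma pvars_mono: "(\<And>x. x \<in> Poly_Mapping.keys \<alpha> \<Longrightarrow> pvars (P x) \<subseteq> V) \<Longrightarrow> pvars (monom P \<alpha>) \<subseteq> V"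
  unfolding monom_def by (intro pvars_prod pvars_power) auto

lemma pvars_subst: "(\<And>x. x \<in> pvars p \<Longrightarrow> pvars (P x) \<subseteq> V) \<Longrightarrow> pvars (subst P p) \<subseteq> V"
  unfolding subst_mono_def
proof (intro pvars_sum)
  fix \<alpha> assume H: "\<And>x. x \<in> pvars p \<Longrightarrow> pvars (P x) \<subseteq> V" and a: "\<alpha> \<in> Poly_Mapping.keys p"
  have "pvars (monom P \<alpha>) \<subseteq> V"
    by (rule pvars_mono) (use H keys_in_pvars[OF a] in blast)
  then show "pvars (Const (Poly_Mapping.lookup p \<alpha>) * monom P \<alpha>) \<subseteq> V"
    using pvars_mult[of "Const (Poly_Mapping.lookup p \<alpha>)" "monom P \<alpha>"] unfolding pvars_Const by simp
qed





lemma gen_ideal_mult: "a \<in> gen_ideal S \<Longrightarrow> r * a \<in> gen_ideal S"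
proof (induction a rule: gen_ideal.induct)
  case zero then show ?case by (simp add: gen_ideal.zero)
next
  case (gen f s) then show ?case using gen_ideal.gen[of f S "r * s"] by (simp add: mult.assoc)
next
  case (add a b) then show ?case using gen_ideal.add by (simp add: distrib_left)
qed

lemma gen_ideal_sum: "(\<And>i. i \<in> A \<Longrightarrow> f i \<in> gen_ideal S) \<Longrightarrow> (\<Sum>i\<in>A. f i) \<in> gen_ideal S"
  by (induction A rule: infinite_finite_induct) (simp_all add: gen_ideal.zero gen_ideal.add)

lemma gen_ideal_subst_zero:
  "a \<in> gen_ideal S \<Longrightarrow> (\<And>f. f \<in> S \<Longrightarrow> subst P f = 0) \<Longrightarrow> subst P a = 0"
  by (induction a rule: gen_ideal.induct) (simp_all add: subst_mult subst_add)




lemma in_unique: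
  assumes "rooted_tree E r ls" "(w, v) \<in> E" "(y, v) \<in> E"
  shows "w = y"
proof -
  have fin: "finite E" and nr: "\<forall>e\<in>E. snd e \<noteq> r"
    and one: "\<forall>v\<in>tree_vertices E. v \<noteq> r \<longrightarrow> card {e \<in> E. snd e = v} = 1"
    using assms(1) unfolding rooted_tree_def by auto
  have vt: "v \<in> tree_vertices E" unfolding tree_vertices_def using assms(2) by force
  have "v \<noteq> r" using nr assms(2) by force
  then have "card {e \<in> E. snd e = v} = 1" using one vt by blast
  then obtain a where A: "{e \<in> E. snd e = v} = {a}" by (rule card_1_singletonE)
  have "(w, v) \<in> {e \<in> E. snd e = v}" "(y, v) \<in> {e \<in> E. snd e = v}" using assms(2,3) by auto
  then show ?thesis unfolding A by (metis prod.inject singletonD)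
qed

lemma comparable:
  assumes T: "rooted_tree E r ls" and "(a, v) \<in> E\<^sup>*" "(b, v) \<in> E\<^sup>*"
  shows "(a, b) \<in> E\<^sup>* \<or> (b, a) \<in> E\<^sup>*"
  using assms(2,3)
proof (induction arbitrary: b rule: rtrancl_induct)
  case base
  then show ?case by blast
next
  case (step y z)
  show ?case
  proof (cases "b = z")
    case True
    then show ?thesis using step.hyps by (meson rtrancl.rtrancl_into_rtrancl)
  next
    case False
    then have "(b, z) \<in> E\<^sup>+" using step.prems by (meson rtranclD)
    then obtain w where w: "(b, w) \<in> E\<^sup>*" "(w, z) \<in> E" by (meson tranclD2)
    then have "w = y" using in_unique[OF T w(2) step.hyps(2)] by simp
    then show ?thesis using step.IH w(1) by blast
  qed
qed

lemma acyclic_root: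
  assumes T: "rooted_tree E r ls" and "(r, v) \<in> E\<^sup>*"
  shows "(v, v) \<notin> E\<^sup>+"
  using assms(2)
proof (induction rule: rtrancl_induct)
  case base
  have nr: "\<forall>e\<in>E. snd e \<noteq> r" using T unfolding rooted_tree_def by auto
  show ?case
  proof
    assume "(r, r) \<in> E\<^sup>+"
    then obtain w where "(w, r) \<in> E" by (meson tranclD2)
    then show False using nr by force
  qed
next
  case (step y v)
  show ?case
  proof
    assume "(v, v) \<in> E\<^sup>+"
    then obtain w where w: "(v, w) \<in> E\<^sup>*" "(w, v) \<in> E" by (meson tranclD2)
    then have "w = y" using in_unique[OF T w(2) step.hyps(2)] by simp
    then have "(y, y) \<in> E\<^sup>+" using w(1) step.hyps(2) by (meson rtrancl_into_trancl2)
    then show False using step.IH by simp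
  qed
qed

lemma no_back:
  assumes T: "rooted_tree E r ls" and e: "e \<in> E"
  shows "(snd e, fst e) \<notin> E\<^sup>*"
proof
  assume h: "(snd e, fst e) \<in> E\<^sup>*"
  have "fst e \<in> tree_vertices E" unfolding tree_vertices_def using e by blast
  then have "(r, fst e) \<in> E\<^sup>*" using T unfolding rooted_tree_def by blast
  moreover have "(fst e, fst e) \<in> E\<^sup>+"
    using e h by (metis prod.collapse rtrancl_into_trancl2)
  ultimately show False using acyclic_root[OF T] by blast
qed

lemma minus_reach:
  assumes "(x, v) \<in> E\<^sup>*" "(snd e, x) \<in> E\<^sup>*"
  shows "(x, v) \<in> (minus_edges E e)\<^sup>*"
  using assms
proof (induction rule: rtrancl_induct)
  case base then show ?case by simp
next
  case (step y z)
  have "(snd e, y) \<in> E\<^sup>*" using step by (meson rtrancl_trans)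
  then have "(y, z) \<in> minus_edges E e"
    using step.hyps(2) unfolding minus_edges_def edge_less_def by auto
  then show ?case using step by (meson rtrancl.rtrancl_into_rtrancl)
qed

lemma plus_reach:
  assumes "(x, v) \<in> E\<^sup>*" "(snd e, v) \<notin> E\<^sup>*"
  shows "(x, v) \<in> (plus_edges E e)\<^sup>*"
  using assms
proof (induction rule: converse_rtrancl_induct)
  case base then show ?case by simp
next
  case (step x y)
  have "(x, y) \<in> plus_edges E e"
  proof -
    have "\<not> edge_less E (x, y) e"
    proof
      assume "edge_less E (x, y) e"
      then have "(snd e, x) \<in> E\<^sup>*" unfolding edge_less_def by simp
      then have "(snd e, v) \<in> E\<^sup>*" using step.hyps by (meson converse_rtrancl_into_rtrancl rtrancl_trans)
      then show False using step.prems by simp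
    qed
    then show ?thesis using step.hyps(1) unfolding plus_edges_def by simp
  qed
  then show ?case using step by (meson converse_rtrancl_into_rtrancl)
qed

lemma plus_reach_head:
  assumes T: "rooted_tree E r ls" and e: "e \<in> E" and h: "(x, snd e) \<in> E\<^sup>*"
  shows "(x, snd e) \<in> (plus_edges E e)\<^sup>*"
proof (cases "x = snd e")
  case True then show ?thesis by simp
next
  case False
  then have "(x, snd e) \<in> E\<^sup>+" using h by (meson rtranclD)
  then obtain w where w: "(x, w) \<in> E\<^sup>*" "(w, snd e) \<in> E" by (meson tranclD2)
  have "w = fst e" using in_unique[OF T w(2), of "fst e"] e by simp
  then have "(x, fst e) \<in> (plus_edges E e)\<^sup>*"
    using plus_reach[OF w(1)] no_back[OF T e] by simp
  moreover have "e \<in> plus_edges E e" using e unfolding plus_edges_def edge_less_def by simp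
  ultimately show ?thesis by (metis prod.collapse rtrancl.rtrancl_into_rtrancl)
qed

lemma plus_sub: "plus_edges E e \<subseteq> E" and minus_sub: "minus_edges E e \<subseteq> E"
  unfolding plus_edges_def minus_edges_def by auto

lemma plus_minus_union: "plus_edges E e \<union> minus_edges E e = E"
  unfolding plus_edges_def minus_edges_def by auto

lemma plus_minus_inter: "e \<in> E \<Longrightarrow> plus_edges E e \<inter> minus_edges E e = {e}"
  unfolding plus_edges_def minus_edges_def edge_less_def by auto

lemma sum_filter_split:
  "sum_list (map g (filter P [0..<k+m])) = sum_list (map g (filter P [0..<k])) +
     sum_list (map (\<lambda>i. g (k+i)) (filter (\<lambda>i. P (k+i)) [0..<m]))"
proof -
  have m: "map (\<lambda>i. k + i) [0..<m] = [k..<k+m]" by (rule nth_equalityI) auto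
  have "[0..<k+m] = [0..<k] @ map (\<lambda>i. k + i) [0..<m]"
    unfolding m by (rule upt_add_eq_append) simp
  then show ?thesis by (simp add: filter_map comp_def)
qed

lemma sum_filter_cong:
  "(\<And>i. i \<in> set xs \<Longrightarrow> f i = f' i) \<Longrightarrow> (\<And>i. i \<in> set xs \<Longrightarrow> P i = P' i) \<Longrightarrow>
   sum_list (map f (filter P xs)) = sum_list (map f' (filter P' xs))"
proof -
  assume a: "\<And>i. i \<in> set xs \<Longrightarrow> f i = f' i" "\<And>i. i \<in> set xs \<Longrightarrow> P i = P' i"
  have A: "filter P xs = filter P' xs" using a(2) by (rule filter_cong[OF refl])
  have B: "map f (filter P' xs) = map f' (filter P' xs)" using a(1) by (intro map_cong) auto
  show ?thesis unfolding A B ..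
qed

lemma take_as_map: "k \<le> length gs \<Longrightarrow> map (\<lambda>i. gs ! i) [0..<k] = take k gs"
  by (rule nth_equalityI) auto

context
  fixes E :: "('v \<times> 'v) set" and r :: 'v and ls :: "'v list" and e :: "'v \<times> 'v" and k :: nat
  assumes T: "rooted_tree E r ls" and e: "e \<in> E" and de_e: "de E ls e = {0..<k}"
begin

lemma k_le: "k \<le> length ls"
proof (rule ccontr)
  assume "\<not> k \<le> length ls"
  then have "length ls \<in> de E ls e" using de_e by simp
  then show False unfolding de_def by simp
qed

lemma label_minus:
  fixes gs :: "'g::monoid_add list"
  assumes e': "e' \<in> minus_edges E e" and len: "length gs = length ls"
  shows "edge_label (minus_edges E e) (take k ls) e' (take k gs) = edge_label E ls e' gs"
proof -
  have se: "(snd e, snd e') \<in> E\<^sup>*"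
  proof (cases "e' = e")
    case True then show ?thesis by simp
  next
    case False
    then have a: "(snd e, fst e') \<in> E\<^sup>*" and b: "e' \<in> E" using e' unfolding minus_edges_def edge_less_def by auto
    have "(fst e', snd e') \<in> E" using b by simp
    then show ?thesis using rtrancl_into_rtrancl[OF a] by blast
  qed
  have sub: "de E ls e' \<subseteq> {0..<k}"
  proof
    fix i assume "i \<in> de E ls e'"
    then have "i < length ls" "(snd e', ls ! i) \<in> E\<^sup>*" unfolding de_def by auto
    then have "(snd e, ls ! i) \<in> E\<^sup>*" "i < length ls" using rtrancl_trans[OF se] by auto
    then have "i \<in> de E ls e" unfolding de_def by simp
    then show "i \<in> {0..<k}" using de_e by simp
  qed
  have kl: "k \<le> length ls" by (rule k_le)
  have mrt: "(minus_edges E e)\<^sup>* \<subseteq> E\<^sup>*" by (rule rtrancl_mono[OF minus_sub])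
  have deq: "i \<in> de (minus_edges E e) (take k ls) e' \<longleftrightarrow> i \<in> de E ls e'" if ik: "i < k" for i
  proof -
    have il: "i < length ls" using ik kl by simp
    have tk: "take k ls ! i = ls ! i" using ik by simp
    have lt: "length (take k ls) = k" using kl by simp
    have "(snd e', ls ! i) \<in> (minus_edges E e)\<^sup>* \<longleftrightarrow> (snd e', ls ! i) \<in> E\<^sup>*"
      using minus_reach[of "snd e'" "ls ! i" E e] se mrt by blast
    then show ?thesis unfolding de_def tk lt using ik il by simp
  qed
  have "edge_label E ls e' gs = sum_list (map (\<lambda>i. gs ! i) (filter (\<lambda>i. i \<in> de E ls e') [0..<k + (length ls - k)]))"
    unfolding edge_label_def using kl by simp
  also have "\<dots> = sum_list (map (\<lambda>i. gs ! i) (filter (\<lambda>i. i \<in> de E ls e') [0..<k]))"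
  proof -
    have "filter (\<lambda>i. k + i \<in> de E ls e') [0..<length ls - k] = []"
    proof (rule filter_False)
      show "\<forall>i\<in>set [0..<length ls - k]. k + i \<notin> de E ls e'" using sub by fastforce
    qed
    then show ?thesis unfolding sum_filter_split by simp
  qed
  also have "\<dots> = sum_list (map (\<lambda>i. take k gs ! i) (filter (\<lambda>i. i \<in> de (minus_edges E e) (take k ls) e') [0..<k]))"
  proof (rule sum_filter_cong)
    fix i assume "i \<in> set [0..<k]"
    then have ik: "i < k" by simp
    then show "gs ! i = take k gs ! i" by simp
    show "(i \<in> de E ls e') = (i \<in> de (minus_edges E e) (take k ls) e')" using deq[OF ik] by simp
  qed
  also have "\<dots> = edge_label (minus_edges E e) (take k ls) e' (take k gs)"
  proof -
    have "length (take k ls) = k" using kl by simp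
    then show ?thesis unfolding edge_label_def by simp
  qed
  finally show ?thesis by simp
qed

lemma label_plus:
  fixes gs :: "'g::monoid_add list"
  assumes e': "e' \<in> plus_edges E e" and len: "length gs = length ls"
  shows "edge_label (plus_edges E e) (snd e # drop k ls) e' (sum_list (take k gs) # drop k gs) = edge_label E ls e' gs"
proof -
  define n where "n = length ls"
  define D where "D = de E ls e'"
  define Dp where "Dp = de (plus_edges E e) (snd e # drop k ls) e'"
  have kl: "k \<le> n" using k_le n_def by simp
  have prt: "(plus_edges E e)\<^sup>* \<subseteq> E\<^sup>*" by (rule rtrancl_mono[OF plus_sub])
  have e'E: "e' \<in> E" using e' plus_sub by blast
  have D0: "0 \<in> Dp \<longleftrightarrow> (snd e', snd e) \<in> E\<^sup>*"
    unfolding Dp_def de_def using prt plus_reach_head[OF T e] by auto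
  have DS: "Suc i \<in> Dp \<longleftrightarrow> k + i \<in> D" if "i < n - k" for i
  proof -
    have li: "k + i < n" using that kl by simp
    have nth: "(snd e # drop k ls) ! Suc i = ls ! (k + i)" using li n_def by simp
    have "(snd e, ls ! (k + i)) \<notin> E\<^sup>*"
    proof
      assume "(snd e, ls ! (k + i)) \<in> E\<^sup>*"
      then have "k + i \<in> de E ls e" using li n_def unfolding de_def by simp
      then show False using de_e by simp
    qed
    then show ?thesis
      unfolding Dp_def D_def de_def using nth li n_def kl prt plus_reach[of "snd e'" "ls ! (k + i)" E e]
      by auto
  qed
  have lab_p: "edge_label (plus_edges E e) (snd e # drop k ls) e' (sum_list (take k gs) # drop k gs)
     = (if 0 \<in> Dp then sum_list (take k gs) else 0) +
       sum_list (map (\<lambda>i. gs ! (k + i)) (filter (\<lambda>i. k + i \<in> D) [0..<n - k]))"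
  proof -
    have "length (snd e # drop k ls) = 1 + (n - k)" using n_def kl by simp
    then have "edge_label (plus_edges E e) (snd e # drop k ls) e' (sum_list (take k gs) # drop k gs)
      = sum_list (map (\<lambda>i. (sum_list (take k gs) # drop k gs) ! i) (filter (\<lambda>i. i \<in> Dp) [0..<1 + (n - k)]))"
      unfolding edge_label_def Dp_def by simp
    also have "\<dots> = (if 0 \<in> Dp then sum_list (take k gs) else 0) +
       sum_list (map (\<lambda>i. (sum_list (take k gs) # drop k gs) ! (1 + i)) (filter (\<lambda>i. 1 + i \<in> Dp) [0..<n - k]))"
      unfolding sum_filter_split by simp
    also have "\<dots> = (if 0 \<in> Dp then sum_list (take k gs) else 0) +
       sum_list (map (\<lambda>i. gs ! (k + i)) (filter (\<lambda>i. k + i \<in> D) [0..<n - k]))"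
      using DS len n_def kl by (intro arg_cong2[where f="(+)"] refl sum_filter_cong) auto
    finally show ?thesis .
  qed
  have lab_o: "edge_label E ls e' gs = sum_list (map (\<lambda>i. gs ! i) (filter (\<lambda>i. i \<in> D) [0..<k])) +
       sum_list (map (\<lambda>i. gs ! (k + i)) (filter (\<lambda>i. k + i \<in> D) [0..<n - k]))"
  proof -
    have "edge_label E ls e' gs = sum_list (map (\<lambda>i. gs ! i) (filter (\<lambda>i. i \<in> D) [0..<k + (n - k)]))"
      unfolding edge_label_def D_def n_def using kl n_def by simp
    then show ?thesis unfolding sum_filter_split .
  qed
  show ?thesis
  proof (cases "(snd e', snd e) \<in> E\<^sup>*")
    case True
    have "filter (\<lambda>i. i \<in> D) [0..<k] = [0..<k]"
    proof (rule filter_True)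
      show "\<forall>i\<in>set [0..<k]. i \<in> D"
      proof
        fix i assume "i \<in> set [0..<k]"
        then have "i \<in> de E ls e" using de_e by simp
        then show "i \<in> D" unfolding D_def de_def using True by (auto intro: rtrancl_trans)
      qed
    qed
    then show ?thesis using lab_p lab_o D0 True take_as_map[of k gs] len kl n_def by simp
  next
    case False
    have "filter (\<lambda>i. i \<in> D) [0..<k] = []"
    proof (rule filter_False)
      show "\<forall>i\<in>set [0..<k]. i \<notin> D"
      proof (intro ballI notI)
        fix i assume i: "i \<in> set [0..<k]" "i \<in> D"
        then have "i \<in> de E ls e" using de_e by simp
        then have a: "(snd e, ls ! i) \<in> E\<^sup>*" unfolding de_def by simp
        have b: "(snd e', ls ! i) \<in> E\<^sup>*" using i(2) unfolding D_def de_def by simp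
        have "(snd e, snd e') \<in> E\<^sup>*" using comparable[OF T a b] False by blast
        moreover have "snd e \<noteq> snd e'" using False by auto
        ultimately have "(snd e, snd e') \<in> E\<^sup>+" by (meson rtranclD)
        then obtain w where w: "(snd e, w) \<in> E\<^sup>*" "(w, snd e') \<in> E" by (meson tranclD2)
        have "w = fst e'" using in_unique[OF T w(2), of "fst e'"] e'E by simp
        moreover have "e' \<noteq> e" using False by auto
        ultimately have "edge_less E e' e" unfolding edge_less_def using w(1) by simp
        then show False using e' unfolding plus_edges_def by simp
      qed
    qed
    then show ?thesis using lab_p lab_o D0 False by simp
  qed
qed

end




definition phiv :: "('v \<times> 'v) set \<Rightarrow> 'v list \<Rightarrow> 'g::monoid_add list \<Rightarrow> (('v \<times> 'v) \<times> 'g, 'k::comm_ring_1) mpoly" where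
  "phiv E' L gs = (\<Prod>e'\<in>E'. Var (e', edge_label E' L e' gs))"

lemma phi_phiv: "phi E' L = subst (phiv E' L)"
  unfolding phi_def phiv_def[abs_def] ..

definition muv :: "('v \<times> 'v) set \<Rightarrow> 'v list \<Rightarrow> 'g::monoid_add list \<Rightarrow> (('v \<times> 'v) \<times> 'g) \<Rightarrow>\<^sub>0 nat" where
  "muv E' L gs = (\<Sum>e'\<in>E'. Poly_Mapping.single (e', edge_label E' L e' gs) 1)"

lemma phiv_monomial: "phiv E' L = (\<lambda>gs. Poly_Mapping.single (muv E' L gs) (1::'k::comm_ring_1))"
proof
  fix gs :: "'a list"
  show "phiv E' L gs = Poly_Mapping.single (muv E' L gs) (1::'k)"
    unfolding phiv_def muv_def Var_def by (rule prod_single)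
qed

lemma int_indep: "int_lin_independent (range (unit_vec :: 'g \<Rightarrow> 'g \<Rightarrow> int))"
  unfolding int_lin_independent_def
proof (intro notI, elim exE conjE bexE)
  fix t u v
  assume t: "finite t" "t \<subseteq> range (unit_vec :: 'g \<Rightarrow> 'g \<Rightarrow> int)"
    and z: "(\<lambda>h'. \<Sum>v\<in>t. u v * v h') = (\<lambda>_. 0)" and v: "v \<in> t" "u v \<noteq> 0"
  obtain h where h: "v = unit_vec h" using t(2) v(1) by blast
  have "(\<Sum>w\<in>t. u w * w h) = 0" using fun_cong[OF z, of h] by simp
  moreover have "(\<Sum>w\<in>t. u w * w h) = (\<Sum>w\<in>t. if w = v then u w else 0)"
  proof (rule sum.cong[OF refl])
    fix w assume "w \<in> t"
    then obtain h' where "w = unit_vec h'" using t(2) by blast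
    then show "u w * w h = (if w = v then u w else 0)"
      using h by (auto simp: unit_vec_def fun_eq_iff)
  qed
  moreover have "(\<Sum>w\<in>t. if w = v then u w else 0) = u v" using t(1) v(1) by simp
  ultimately show False using v(2) by simp
qed

lemma D_inj:
  fixes c :: "'y \<Rightarrow> nat"
  assumes "\<And>y. c y > 0"
  shows "inj (mmap (\<lambda>y. Poly_Mapping.single y (c y)))"
proof (rule injI)
  fix \<alpha> \<beta> :: "'y \<Rightarrow>\<^sub>0 nat"
  have L: "Poly_Mapping.lookup (mmap (\<lambda>y. Poly_Mapping.single y (c y)) \<gamma>) v = Poly_Mapping.lookup \<gamma> v * c v" for \<gamma> v
  proof -
    have "(\<Sum>x\<in>Poly_Mapping.keys \<gamma>. Poly_Mapping.lookup \<gamma> x * Poly_Mapping.lookup (Poly_Mapping.single x (c x)) v)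
        = (\<Sum>x\<in>Poly_Mapping.keys \<gamma>. if x = v then Poly_Mapping.lookup \<gamma> x * c x else 0)"
      by (rule sum.cong) (auto simp: lookup_single when_def)
    also have "\<dots> = Poly_Mapping.lookup \<gamma> v * c v" by (simp add: sum.delta in_keys_iff)
    finally show ?thesis unfolding lookup_mmap .
  qed
  assume "mmap (\<lambda>y. Poly_Mapping.single y (c y)) \<alpha> = mmap (\<lambda>y. Poly_Mapping.single y (c y)) \<beta>"
  then have "Poly_Mapping.lookup \<alpha> v * c v = Poly_Mapping.lookup \<beta> v * c v" for v using L by metis
  then show "\<alpha> = \<beta>" using assms by (intro poly_mapping_eqI) (metis less_irrefl mult_right_cancel)
qed




lemma half:
  fixes P0 :: "'x \<Rightarrow> ('a, 'k::comm_ring_1) mpoly" and f :: "'x \<Rightarrow> 'g::monoid_add list"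
  assumes "Poly_Mapping.keys \<alpha> \<subseteq> Q" "Poly_Mapping.keys \<beta> \<subseteq> Q" "monom P0 \<alpha> = monom P0 \<beta>"
    and "\<And>x. x \<in> Q \<Longrightarrow> f x \<in> q_vars (length L')"
    and "\<And>x. x \<in> Q \<Longrightarrow> subst \<Pi> (P0 x) = phiv E' L' (f x)"
  shows "monom (\<lambda>x. Var (f x)) \<alpha> - monom (\<lambda>x. Var (f x)) \<beta> \<in> (I_GT E' L' :: ('g list, 'k) mpoly set)"
proof -
  have pv: "pvars (monom (\<lambda>x. Var (f x) :: ('g list, 'k) mpoly) \<gamma>) \<subseteq> q_vars (length L')"
    if "Poly_Mapping.keys \<gamma> \<subseteq> Q" for \<gamma>
    by (rule pvars_mono) (use that assms(4) in \<open>auto simp: pvars_Var\<close>)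
  have ph: "phi E' L' (monom (\<lambda>x. Var (f x) :: ('g list, 'k) mpoly) \<gamma>) = subst \<Pi> (monom P0 \<gamma>)"
    if "Poly_Mapping.keys \<gamma> \<subseteq> Q" for \<gamma>
  proof -
    have "phi E' L' (monom (\<lambda>x. Var (f x) :: ('g list, 'k) mpoly) \<gamma>) = monom (\<lambda>x. phiv E' L' (f x)) \<gamma>"
      unfolding phi_phiv subst_mono subst_Var ..
    also have "\<dots> = monom (\<lambda>x. subst \<Pi> (P0 x)) \<gamma>"
      by (rule monom_cong) (use that assms(5) in auto)
    also have "\<dots> = subst \<Pi> (monom P0 \<gamma>)" by (simp add: subst_mono)
    finally show ?thesis .
  qed
  let ?a = "monom (\<lambda>x. Var (f x) :: ('g list, 'k) mpoly) \<alpha>"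
  let ?b = "monom (\<lambda>x. Var (f x) :: ('g list, 'k) mpoly) \<beta>"
  have "pvars (?a - ?b) \<subseteq> q_vars (length L')"
    using pvars_diff[of ?a ?b] pv[OF assms(1)] pv[OF assms(2)] by blast
  moreover have "phi E' L' (?a - ?b) = 0"
    using ph[OF assms(1)] ph[OF assms(2)] assms(3) by (simp add: phi_def subst_diff)
  ultimately show ?thesis unfolding I_GT_def polys_in_def by simp
qed

context
  fixes E :: "('v \<times> 'v) set" and r :: 'v and ls :: "'v list" and e :: "'v \<times> 'v" and k :: nat
  assumes T: "rooted_tree E r ls" and e: "e \<in> E" and de_e: "de E ls e = {0..<k}"
begin

lemma finE: "finite E" using T unfolding rooted_tree_def by simp

lemma proj_plus:
  fixes gs :: "'g::monoid_add list"
  assumes len: "length gs = length ls"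
  shows "subst (\<lambda>v. if fst v \<in> plus_edges E e then Var v else 1) (phiv E ls gs :: (('v \<times> 'v) \<times> 'g, 'k::comm_ring_1) mpoly)
     = phiv (plus_edges E e) (snd e # drop k ls) (sum_list (take k gs) # drop k gs)"
proof -
  have "subst (\<lambda>v. if fst v \<in> plus_edges E e then Var v else 1) (phiv E ls gs :: (('v \<times> 'v) \<times> 'g, 'k) mpoly)
      = (\<Prod>e'\<in>E. if e' \<in> plus_edges E e then Var (e', edge_label E ls e' gs) else 1)"
    unfolding phiv_def subst_prod subst_Var by simp
  also have "\<dots> = (\<Prod>e'\<in>{x\<in>E. x \<in> plus_edges E e}. Var (e', edge_label E ls e' gs))"
    using finE by (simp add: prod.inter_filter)
  also have "{x\<in>E. x \<in> plus_edges E e} = plus_edges E e" using plus_sub by blast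
  also have "(\<Prod>e'\<in>plus_edges E e. Var (e', edge_label E ls e' gs) :: (('v \<times> 'v) \<times> 'g, 'k) mpoly)
      = phiv (plus_edges E e) (snd e # drop k ls) (sum_list (take k gs) # drop k gs)"
    unfolding phiv_def using label_plus[OF T e de_e _ len] by (intro prod.cong) auto
  finally show ?thesis .
qed

lemma proj_minus:
  fixes gs :: "'g::monoid_add list"
  assumes len: "length gs = length ls"
  shows "subst (\<lambda>v. if fst v \<in> minus_edges E e then Var v else 1) (phiv E ls gs :: (('v \<times> 'v) \<times> 'g, 'k::comm_ring_1) mpoly)
     = phiv (minus_edges E e) (take k ls) (take k gs)"
proof -
  have "subst (\<lambda>v. if fst v \<in> minus_edges E e then Var v else 1) (phiv E ls gs :: (('v \<times> 'v) \<times> 'g, 'k) mpoly)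
      = (\<Prod>e'\<in>E. if e' \<in> minus_edges E e then Var (e', edge_label E ls e' gs) else 1)"
    unfolding phiv_def subst_prod subst_Var by simp
  also have "\<dots> = (\<Prod>e'\<in>{x\<in>E. x \<in> minus_edges E e}. Var (e', edge_label E ls e' gs))"
    using finE by (simp add: prod.inter_filter)
  also have "{x\<in>E. x \<in> minus_edges E e} = minus_edges E e" using minus_sub by blast
  also have "(\<Prod>e'\<in>minus_edges E e. Var (e', edge_label E ls e' gs) :: (('v \<times> 'v) \<times> 'g, 'k) mpoly)
      = phiv (minus_edges E e) (take k ls) (take k gs)"
    unfolding phiv_def using label_minus[OF T e de_e _ len] by (intro prod.cong) auto
  finally show ?thesis .
qed

end




context
  fixes E :: "('v \<times> 'v) set" and r :: 'v and ls :: "'v list" and e :: "'v \<times> 'v" and k :: nat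
  assumes T: "rooted_tree E r ls" and e: "e \<in> E" and de_e: "de E ls e = {0..<k}"
begin

lemma binomial:
  fixes \<alpha> \<beta> :: "'g::monoid_add list \<Rightarrow>\<^sub>0 nat"
  assumes ka: "Poly_Mapping.keys \<alpha> \<subseteq> q_vars (length ls)" and kb: "Poly_Mapping.keys \<beta> \<subseteq> q_vars (length ls)"
    and mm: "mmap (muv E ls) \<alpha> = mmap (muv E ls) \<beta>"
  shows "monom (\<lambda>gs. Var (Inl (sum_list (take k gs) # drop k gs)) * Var (Inr (take k gs)) :: ('g list + 'g list, 'k::comm_ring_1) mpoly) \<alpha>
       - monom (\<lambda>gs. Var (Inl (sum_list (take k gs) # drop k gs)) * Var (Inr (take k gs))) \<beta>
     \<in> gen_ideal (subst (\<lambda>x. Var (Inl x)) ` (I_GT (plus_edges E e) (snd e # drop k ls) :: ('g list, 'k) mpoly set)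
                 \<union> subst (\<lambda>y. Var (Inr y)) ` (I_GT (minus_edges E e) (take k ls) :: ('g list, 'k) mpoly set))"
    (is "?L \<in> gen_ideal ?S")
proof -
  have kl: "k \<le> length ls" using k_le[OF T e de_e] .
  have P0: "monom (phiv E ls) \<alpha> = (monom (phiv E ls) \<beta> :: (('v \<times> 'v) \<times> 'g, 'k) mpoly)"
    unfolding phiv_monomial monom_monomial mm ..
  define a where "a \<gamma> = monom (\<lambda>x. Var (sum_list (take k x) # drop k x) :: ('g list, 'k) mpoly) \<gamma>" for \<gamma>
  define b where "b \<gamma> = monom (\<lambda>x. Var (take k x) :: ('g list, 'k) mpoly) \<gamma>" for \<gamma>
  have ha: "a \<alpha> - a \<beta> \<in> I_GT (plus_edges E e) (snd e # drop k ls)"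
    unfolding a_def
  proof (rule half[OF ka kb P0])
    fix x :: "'g list" assume "x \<in> q_vars (length ls)"
    then have len: "length x = length ls" by (simp add: q_vars_def)
    show "sum_list (take k x) # drop k x \<in> q_vars (length (snd e # drop k ls))"
      using len by (simp add: q_vars_def)
    show "subst (\<lambda>v. if fst v \<in> plus_edges E e then Var v else 1) (phiv E ls x :: (('v \<times> 'v) \<times> 'g, 'k) mpoly)
        = phiv (plus_edges E e) (snd e # drop k ls) (sum_list (take k x) # drop k x)"
      by (rule proj_plus[OF T e de_e len])
  qed
  have hb: "b \<alpha> - b \<beta> \<in> I_GT (minus_edges E e) (take k ls)"
    unfolding b_def
  proof (rule half[OF ka kb P0])
    fix x :: "'g list" assume "x \<in> q_vars (length ls)"
    then have len: "length x = length ls" by (simp add: q_vars_def)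
    show "take k x \<in> q_vars (length (take k ls))"
      using len kl by (simp add: q_vars_def)
    show "subst (\<lambda>v. if fst v \<in> minus_edges E e then Var v else 1) (phiv E ls x :: (('v \<times> 'v) \<times> 'g, 'k) mpoly)
        = phiv (minus_edges E e) (take k ls) (take k x)"
      by (rule proj_minus[OF T e de_e len])
  qed
  define A where "A \<gamma> = (subst (\<lambda>x. Var (Inl x)) (a \<gamma>) :: ('g list + 'g list, 'k) mpoly)" for \<gamma>
  define B where "B \<gamma> = (subst (\<lambda>y. Var (Inr y)) (b \<gamma>) :: ('g list + 'g list, 'k) mpoly)" for \<gamma>
  have split: "monom (\<lambda>gs. Var (Inl (sum_list (take k gs) # drop k gs)) * Var (Inr (take k gs)) :: ('g list + 'g list, 'k) mpoly) \<gamma>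
      = A \<gamma> * B \<gamma>" for \<gamma>
    unfolding A_def B_def a_def b_def subst_mono subst_Var
    unfolding monom_def power_mult_distrib prod.distrib ..
  have "?L = B \<alpha> * (A \<alpha> - A \<beta>) + A \<beta> * (B \<alpha> - B \<beta>)"
    unfolding split by (simp add: algebra_simps)
  also have "\<dots> = B \<alpha> * subst (\<lambda>x. Var (Inl x)) (a \<alpha> - a \<beta>) + A \<beta> * subst (\<lambda>y. Var (Inr y)) (b \<alpha> - b \<beta>)"
    unfolding A_def B_def subst_diff ..
  also have "\<dots> \<in> gen_ideal ?S"
    using ha hb by (intro gen_ideal.add gen_ideal.gen) auto
  finally show ?thesis .
qed

end




lemma Var_sq: "Var v * Var v = Poly_Mapping.single (Poly_Mapping.single v 2) (1::'k::comm_ring_1)"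
proof -
  have "Poly_Mapping.single v (1::nat) + Poly_Mapping.single v 1 = Poly_Mapping.single v 2"
    unfolding single_add[symmetric] by (simp add: numeral_2_eq_2 del: One_nat_def)
  then show ?thesis unfolding Var_def mult_single by simp
qed

context
  fixes E :: "('v \<times> 'v) set" and r :: 'v and ls :: "'v list" and e :: "'v \<times> 'v" and k :: nat
  assumes T: "rooted_tree E r ls" and e: "e \<in> E" and de_e: "de E ls e = {0..<k}"
begin

lemma doubling:
  fixes gs :: "'g::monoid_add list"
  assumes len: "length gs = length ls"
  shows "phiv (plus_edges E e) (snd e # drop k ls) (sum_list (take k gs) # drop k gs)
         * phiv (minus_edges E e) (take k ls) (take k gs)
       = subst (\<lambda>v. Poly_Mapping.single (Poly_Mapping.single v (if fst v = e then 2 else 1)) 1) (phiv E ls gs :: (('v \<times> 'v) \<times> 'g, 'k::comm_ring_1) mpoly)"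
proof -
  define V where "V e' = (Var (e', edge_label E ls e' gs) :: (('v \<times> 'v) \<times> 'g, 'k) mpoly)" for e'
  have fin: "finite E" by (rule finE[OF T e de_e])
  have p: "phiv (plus_edges E e) (snd e # drop k ls) (sum_list (take k gs) # drop k gs) = (\<Prod>e'\<in>plus_edges E e. V e')"
    unfolding phiv_def V_def using label_plus[OF T e de_e _ len] by (intro prod.cong) auto
  have m: "phiv (minus_edges E e) (take k ls) (take k gs) = (\<Prod>e'\<in>minus_edges E e. V e')"
    unfolding phiv_def V_def using label_minus[OF T e de_e _ len] by (intro prod.cong) auto
  have "(\<Prod>e'\<in>plus_edges E e. V e') * (\<Prod>e'\<in>minus_edges E e. V e')
      = (\<Prod>e'\<in>plus_edges E e \<union> minus_edges E e. V e') * (\<Prod>e'\<in>plus_edges E e \<inter> minus_edges E e. V e')"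
    using finite_subset[OF plus_sub fin] finite_subset[OF minus_sub fin] by (intro prod.union_inter[symmetric])
  also have "\<dots> = (\<Prod>e'\<in>E. V e') * V e"
    unfolding plus_minus_union plus_minus_inter[OF e] by simp
  finally have lhs: "(\<Prod>e'\<in>plus_edges E e. V e') * (\<Prod>e'\<in>minus_edges E e. V e') = (\<Prod>e'\<in>E. V e') * V e" .
  have "subst (\<lambda>v. Poly_Mapping.single (Poly_Mapping.single v (if fst v = e then 2 else 1)) 1) (phiv E ls gs :: (('v \<times> 'v) \<times> 'g, 'k) mpoly)
      = (\<Prod>e'\<in>E. V e' * (if e' = e then V e' else 1))"
    unfolding phiv_def subst_prod subst_Var
  proof (rule prod.cong[OF refl])
    fix e' assume "e' \<in> E"
    show "Poly_Mapping.single (Poly_Mapping.single (e', edge_label E ls e' gs) (if fst (e', edge_label E ls e' gs) = e then 2 else 1)) 1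
        = V e' * (if e' = e then V e' else 1)"
    proof (cases "e' = e")
      case True
      have "V e' * V e' = Poly_Mapping.single (Poly_Mapping.single (e', edge_label E ls e' gs) 2) 1"
        unfolding V_def by (rule Var_sq)
      then show ?thesis using True by simp
    next
      case False
      then show ?thesis unfolding V_def Var_def by simp
    qed
  qed
  also have "\<dots> = (\<Prod>e'\<in>E. V e') * V e"
    using fin e by (simp add: prod.distrib prod.delta)
  finally show ?thesis using p m lhs by simp
qed

end




theorem theorem3p9:
  fixes E :: "('v \<times> 'v) set" and r :: 'v and ls :: "'v list"
    and e :: "'v \<times> 'v" and k :: nat
  assumes tree: "rooted_tree E r ls"
    and intervals: "\<forall>e'\<in>E. \<exists>a b. de E ls e' = {a..b}"
    and interior: "interior_edge E r ls e"
    and de_e: "de E ls e = {0..<k}"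
  shows "int_lin_independent (range (unit_vec :: 'g::{group_add, finite} \<Rightarrow> 'g \<Rightarrow> int))
    \<and> (\<lambda>p. subst (\<lambda>gs. Var (sum_list (take k gs) # drop k gs, take k gs)) p)
          ` (I_GT E ls :: ('g list, 'k::field) mpoly set)
      = toric_fiber_product
          (q_vars (length ls - k + 1)) (q_vars k) hd sum_list
          (I_GT (plus_edges E e) (snd e # drop k ls))
          (I_GT (minus_edges E e) (take k ls))"
proof -
  have e: "e \<in> E" using interior unfolding interior_edge_def by simp
  have kl: "k \<le> length ls" using k_le[OF tree e de_e] .
  define n where "n = length ls"
  define ren where "ren gs = (Var (sum_list (take k gs) # drop k gs, take k gs) :: ('g list \<times> 'g list, 'k) mpoly)" for gs :: "'g list"
  define Ep where "Ep = plus_edges E e"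
  define Em where "Em = minus_edges E e"
  define Lp where "Lp = snd e # drop k ls"
  define Lm where "Lm = take k ls"
  define TV where "TV = tfp_vars (q_vars (n - k + 1)) (q_vars k) (hd :: 'g list \<Rightarrow> 'g) sum_list"
  define S where "S = subst (\<lambda>x. Var (Inl x)) ` (I_GT Ep Lp :: ('g list, 'k) mpoly set)
                 \<union> subst (\<lambda>y. Var (Inr y)) ` (I_GT Em Lm :: ('g list, 'k) mpoly set)"
  define X where "X = (\<lambda>(j, k). Var (Inl j) * Var (Inr k) :: ('g list + 'g list, 'k) mpoly)"
  have TFP: "toric_fiber_product (q_vars (length ls - k + 1)) (q_vars k) hd sum_list
          (I_GT (plus_edges E e) (snd e # drop k ls)) (I_GT (minus_edges E e) (take k ls))
      = {p \<in> polys_in TV. subst X p \<in> gen_ideal S}"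
    unfolding toric_fiber_product_def TV_def S_def X_def Ep_def Em_def Lp_def Lm_def n_def ..
  have sub1: "subst ren p \<in> {p \<in> polys_in TV. subst X p \<in> gen_ideal S}" if p: "p \<in> I_GT E ls" for p
  proof -
    have pv: "pvars p \<subseteq> q_vars n" and ker: "phi E ls p = 0"
      using p unfolding I_GT_def polys_in_def n_def by auto
    have "pvars (subst ren p) \<subseteq> TV"
    proof (rule pvars_subst)
      fix gs assume "gs \<in> pvars p"
      then have len: "length gs = n" using pv unfolding q_vars_def by auto
      show "pvars (ren gs) \<subseteq> TV"
        unfolding ren_def pvars_Var TV_def tfp_vars_def q_vars_def using len kl n_def by simp
    qed
    moreover have "subst X (subst ren p) \<in> gen_ideal S"
    proof -
      define N where "N gs = (Var (Inl (sum_list (take k gs) # drop k gs)) * Var (Inr (take k gs)) :: ('g list + 'g list, 'k) mpoly)" for gs :: "'g list"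
      have XN: "subst X (subst ren p) = subst N p"
        unfolding subst_comp ren_def subst_Var X_def N_def by simp
      have "subst (\<lambda>x. Poly_Mapping.single (muv E ls x) (1::'k)) p = 0"
        using ker unfolding phi_phiv phiv_monomial .
      then obtain rep where rep: "\<forall>\<alpha>\<in>Poly_Mapping.keys p. rep \<alpha> \<in> Poly_Mapping.keys p \<and> mmap (muv E ls) (rep \<alpha>) = mmap (muv E ls) \<alpha>"
        and pe: "p = (\<Sum>\<alpha>\<in>Poly_Mapping.keys p. Const (Poly_Mapping.lookup p \<alpha>) *
            (Poly_Mapping.single \<alpha> 1 - Poly_Mapping.single (rep \<alpha>) 1))"
        using kernel_decomp by blast
      have "subst N p = (\<Sum>\<alpha>\<in>Poly_Mapping.keys p. Const (Poly_Mapping.lookup p \<alpha>) * (monom N \<alpha> - monom N (rep \<alpha>)))"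
        by (subst pe) (simp add: subst_sum subst_mult subst_diff subst_single)
      also have "\<dots> \<in> gen_ideal S"
      proof (rule gen_ideal_sum, rule gen_ideal_mult)
        fix \<alpha> assume a: "\<alpha> \<in> Poly_Mapping.keys p"
        then have ra: "rep \<alpha> \<in> Poly_Mapping.keys p" "mmap (muv E ls) \<alpha> = mmap (muv E ls) (rep \<alpha>)"
          using rep by auto
        show "monom N \<alpha> - monom N (rep \<alpha>) \<in> gen_ideal S"
          unfolding N_def S_def Ep_def Em_def Lp_def Lm_def
          by (rule binomial[OF tree e de_e])
             (use keys_in_pvars[OF a] keys_in_pvars[OF ra(1)] pv ra(2) n_def in auto)
      qed
      finally show ?thesis unfolding XN .
    qed
    ultimately show ?thesis unfolding polys_in_def by simp
  qed
  have sub2: "p \<in> subst ren ` I_GT E ls" if p: "p \<in> {p \<in> polys_in TV. subst X p \<in> gen_ideal S}" for p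
  proof -
    have pT: "pvars p \<subseteq> TV" and hid: "subst X p \<in> gen_ideal S"
      using p unfolding polys_in_def by auto
    define \<sigma> where "\<sigma> z = snd z @ tl (fst z)" for z :: "'g list \<times> 'g list"
    define p' where "p' = subst (\<lambda>z. Var (\<sigma> z)) p"
    have zTV: "length (fst z) = n - k + 1 \<and> length (snd z) = k \<and> hd (fst z) = sum_list (snd z)" if "z \<in> TV" for z
      using that unfolding TV_def tfp_vars_def q_vars_def by auto
    have sig: "length (\<sigma> z) = n \<and> take k (\<sigma> z) = snd z \<and> sum_list (take k (\<sigma> z)) # drop k (\<sigma> z) = fst z"
      if "z \<in> TV" for z
    proof -
      have z: "length (fst z) = n - k + 1" "length (snd z) = k" "hd (fst z) = sum_list (snd z)"
        using zTV[OF that] by auto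
      have "fst z \<noteq> []" using z(1) by auto
      then have "hd (fst z) # tl (fst z) = fst z" by simp
      then show ?thesis unfolding \<sigma>_def using z kl n_def by auto
    qed
    have "subst ren p' = subst (\<lambda>z. ren (\<sigma> z)) p"
      unfolding p'_def subst_comp subst_Var ..
    also have "\<dots> = subst Var p"
    proof (rule subst_cong)
      fix z assume "z \<in> pvars p"
      then have "z \<in> TV" using pT by auto
      then have "sum_list (take k (\<sigma> z)) # drop k (\<sigma> z) = fst z" "take k (\<sigma> z) = snd z"
        using sig[OF \<open>z \<in> TV\<close>] by blast+
      then show "ren (\<sigma> z) = Var z" unfolding ren_def by simp
    qed
    also have "\<dots> = p" by (rule subst_Var_id)
    finally have eq: "subst ren p' = p" .
    have pv': "pvars p' \<subseteq> q_vars n"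
      unfolding p'_def
    proof (rule pvars_subst)
      fix z assume "z \<in> pvars p"
      then have "z \<in> TV" using pT by auto
      then show "pvars (Var (\<sigma> z) :: ('g list, 'k) mpoly) \<subseteq> q_vars n"
        unfolding pvars_Var q_vars_def using sig by simp
    qed
    define Psi where "Psi v = ((case v of Inl x \<Rightarrow> phiv Ep Lp x | Inr y \<Rightarrow> phiv Em Lm y) :: (('v \<times> 'v) \<times> 'g, 'k) mpoly)" for v
    define c where "c v = (if fst v = e then 2 else (1::nat))" for v :: "('v \<times> 'v) \<times> 'g"
    define Dm where "Dm = subst (\<lambda>v. Poly_Mapping.single (Poly_Mapping.single v (c v)) (1::'k))"
    have "subst Psi (subst X p) = 0"
    proof (rule gen_ideal_subst_zero[OF hid])
      fix f assume "f \<in> S"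
      then consider (l) g where "g \<in> I_GT Ep Lp" "f = subst (\<lambda>x. Var (Inl x)) g"
        | (r) g where "g \<in> I_GT Em Lm" "f = subst (\<lambda>x. Var (Inr x)) g"
        unfolding S_def by blast
      then show "subst Psi f = 0"
      proof cases
        case l
        then show ?thesis using l by (simp add: subst_comp Psi_def I_GT_def phi_phiv)
      next
        case r
        then show ?thesis using r by (simp add: subst_comp Psi_def I_GT_def phi_phiv)
      qed
    qed
    also have "subst Psi (subst X p) = subst (\<lambda>z. phiv Ep Lp (fst z) * phiv Em Lm (snd z)) p"
      unfolding subst_comp X_def by (simp add: case_prod_beta subst_mult Psi_def)
    also have "\<dots> = subst (\<lambda>z. Dm (phiv E ls (\<sigma> z))) p"
    proof (rule subst_cong)
      fix z assume "z \<in> pvars p"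
      then have z: "z \<in> TV" using pT by auto
      have "phiv Ep Lp (sum_list (take k (\<sigma> z)) # drop k (\<sigma> z)) * phiv Em Lm (take k (\<sigma> z))
          = Dm (phiv E ls (\<sigma> z))"
        unfolding Ep_def Em_def Lp_def Lm_def Dm_def c_def
        by (rule doubling[OF tree e de_e]) (use sig[OF z] n_def in simp)
      moreover have "sum_list (take k (\<sigma> z)) # drop k (\<sigma> z) = fst z" "take k (\<sigma> z) = snd z"
        using sig[OF z] by blast+
      ultimately show "phiv Ep Lp (fst z) * phiv Em Lm (snd z) = Dm (phiv E ls (\<sigma> z))"
        by simp
    qed
    also have "\<dots> = Dm (phi E ls p')"
      unfolding Dm_def p'_def phi_phiv subst_comp subst_Var ..
    finally have "Dm (phi E ls p') = 0" by simp
    then have "phi E ls p' = 0"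
      unfolding Dm_def by (rule subst_monomial_inj[OF D_inj, rotated]) (simp add: c_def)
    then have "p' \<in> I_GT E ls" unfolding I_GT_def polys_in_def using pv' n_def by simp
    then show ?thesis using eq by blast
  qed
  have "subst ren ` I_GT E ls = {p \<in> polys_in TV. subst X p \<in> gen_ideal S}"
    using sub1 sub2 by blast
  then show ?thesis using int_indep TFP unfolding ren_def by simp
qed


end
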